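(* Suppose the second-order condition of the context holds with $\gamma_0>-1/2$ and the intermediate sequence $(k_n)$ satisfies $\Phi(k_n/n)=O(k_n^{-1/2})$. With $Q_n$, $\tilde a$ as in the context and $$Y_n(t)=k_n^{1/2}\Big(\frac{Q_n(t)-Q_n(1)}{\tilde a(k_n/n)}-\frac{t^{-\gamma_0}-1}{\gamma_0}\Big),$$ for every $\varepsilon>0$ we have, as $n\to\infty$, $$\sup_{0<t\le1}t^{\gamma_0+1/2+\varepsilon}|Y_n(t)|=O_p(1).$$
   Context: Let $X_1,X_2,\dots$ be i.i.d. with distribution function $F$, $F^{\leftarrow}$ its generalized inverse, $X_{1,n}\le\dots\le X_{n,n}$ the order statistics; $(k_n)$ is intermediate: $k_n\to\infty$, $k_n/n\to0$. $(t^{-\gamma_0}-1)/\gamma_0$ is read as $-\log t$ when $\gamma_0=0$. Second-order condition: there exist $\gamma_0>-1/2$ and measurable, locally bounded $a,\Phi:(0,1)\to(0,\infty)$, $\Psi:(0,\infty)\to\mathbb R$ with $\lim_{t\downarrow0}\big[(F^{\leftarrow}(1-tx)-F^{\leftarrow}(1-t))/a(t)-(x^{-\gamma_0}-1)/\gamma_0\big]/\Phi(t)=\Psi(x)$ for all $x>0$, $x\mapsto\Psi(x)/(x^{-\gamma_0}-1)$ not constant, $\Phi$ eventually not changing sign, $\Phi(t)\to0$ as $t\downarrow0$. Construction: on a suitable probability space there are a standard Brownian motion $W$ and processes $Q_n$ with $(Q_n(t))_{t\in[0,1]}\overset{d}{=}(X_{n-[k_nt],n})_{t\in[0,1]}$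 for each $n$, and functions $\tilde a(k_n/n)=a(k_n/n)(1+o(\Phi(k_n/n)))$, $\tilde\Phi(k_n/n)\sim\Phi(k_n/n)$, such that for all $\varepsilon>0$, $\sup_{t\in(0,1]}t^{\gamma_0+1/2+\varepsilon}\big|\frac{Q_n(t)-F^{\leftarrow}(1-k_n/n)}{\tilde a(k_n/n)}-\big(\frac{t^{-\gamma_0}-1}{\gamma_0}-t^{-(\gamma_0+1)}\frac{W(k_nt)}{k_n}+\tilde\Phi(\frac{k_n}{n})\Psi(t)\big)\big|=o_p(k_n^{-1/2})+o_p(\tilde\Phi(k_n/n))$. *)

theory Defs
  imports "HOL-Probability.Probability" "HOL-Library.Landau_Symbols"
begin

definition gen_inv :: "(real \<Rightarrow> real) \<Rightarrow> real \<Rightarrow> real" where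
  "gen_inv F p = Inf {x. p \<le> F x}"

definition hfun :: "real \<Rightarrow> real \<Rightarrow> real" where
  "hfun g x = (if g = 0 then - ln x else (x powr (- g) - 1) / g)"

text \<open>Order statistic X_{j,n} (1-based j) of X_1, ..., X_n.\<close>
definition order_stat :: "(nat \<Rightarrow> 'b \<Rightarrow> real) \<Rightarrow> nat \<Rightarrow> nat \<Rightarrow> 'b \<Rightarrow> real" where
  "order_stat X n j \<omega> = sort (map (\<lambda>i. X i \<omega>) [1..<Suc n]) ! (j - 1)"

definition locally_bounded_on :: "real set \<Rightarrow> (real \<Rightarrow> real) \<Rightarrow> bool" where
  "locally_bounded_on S f \<longleftrightarrow> (\<forall>K. compact K \<and> K \<subseteq> S \<longrightarrow> bounded (f ` K))"

definition std_brownian_motion :: "'a measure \<Rightarrow> (real \<Rightarrow> 'a \<Rightarrow> real) \<Rightarrow> bool" where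
  "std_brownian_motion M W \<longleftrightarrow>
     (\<forall>t\<ge>0. W t \<in> borel_measurable M) \<and>
     (AE \<omega> in M. W 0 \<omega> = 0) \<and>
     (AE \<omega> in M. continuous_on {0..} (\<lambda>t. W t \<omega>)) \<and>
     (\<forall>s t. 0 \<le> s \<and> s < t \<longrightarrow>
        distributed M lborel (\<lambda>\<omega>. W t \<omega> - W s \<omega>)
          (\<lambda>x. ennreal (normal_density 0 (sqrt (t - s)) x))) \<and>
     (\<forall>(ts :: nat \<Rightarrow> real) m. 0 \<le> ts 0 \<and> (\<forall>i<m. ts i < ts (Suc i)) \<longrightarrow>
        prob_space.indep_vars M (\<lambda>_. borel) (\<lambda>i \<omega>. W (ts (Suc i)) \<omega> - W (ts i) \<omega>) {..<m})"

text \<open>Outer-probability versions of stochastic order symbols for the supremum over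
  t in (0,1] of a random process G n t: sup = O_p(1), and sup = o_p(r n).\<close>
definition sup_Op1 :: "'a measure \<Rightarrow> (nat \<Rightarrow> real \<Rightarrow> 'a \<Rightarrow> real) \<Rightarrow> bool" where
  "sup_Op1 M G \<longleftrightarrow> (\<forall>\<delta>>0. \<exists>C. \<forall>\<^sub>F n in sequentially. \<exists>A\<in>sets M.
     {\<omega>\<in>space M. \<exists>t\<in>{0<..1}. \<bar>G n t \<omega>\<bar> > C} \<subseteq> A \<and> measure M A < \<delta>)"

definition sup_op :: "'a measure \<Rightarrow> (nat \<Rightarrow> real \<Rightarrow> 'a \<Rightarrow> real) \<Rightarrow> (nat \<Rightarrow> real) \<Rightarrow> bool" where
  "sup_op M G r \<longleftrightarrow> (\<forall>\<eta>>0. \<forall>\<delta>>0. \<forall>\<^sub>F n in sequentially. \<exists>A\<in>sets M.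
     {\<omega>\<in>space M. \<exists>t\<in>{0<..1}. \<bar>G n t \<omega>\<bar> > \<eta> * r n} \<subseteq> A \<and> measure M A < \<delta>)"

end

theory Submission
  imports Defs
begin

lemma bm_tail:
  assumes M: "prob_space M" and W: "std_brownian_motion M W" and s: "0 \<le> s" "s < u" and x: "x > 0" and p: "p \<ge> 1"
  shows "measure M {\<omega>\<in>space M. \<bar>W u \<omega> - W s \<omega>\<bar> \<ge> x} \<le> fact(2*p) * (u-s)^p / x^(2*p)"
proof -
  interpret prob_space M by fact
  define \<sigma> where "\<sigma> = sqrt (u - s)"
  have \<sigma>: "\<sigma> > 0" using s by (simp add: \<sigma>_def)
  have D: "distributed M lborel (\<lambda>\<omega>. W u \<omega> - W s \<omega>) (\<lambda>x. ennreal (normal_density 0 \<sigma> x))"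
    using W s unfolding std_brownian_motion_def \<sigma>_def by blast
  have Zm[measurable]: "(\<lambda>\<omega>. W u \<omega> - W s \<omega>) \<in> borel_measurable M"
    using D unfolding distributed_def by simp
  have int1: "integrable lborel (\<lambda>x. normal_density 0 \<sigma> x * x ^ (2*p))"
    using integrable_normal_moment[where \<mu>=0 and \<sigma>=\<sigma> and k="2*p"] \<sigma> by simp
  have intZ: "integrable M (\<lambda>\<omega>. (W u \<omega> - W s \<omega>) ^ (2*p))"
    using distributed_integrable[OF D, of "\<lambda>x. x ^ (2*p)"] int1 by simp
  have EZ: "(\<integral>\<omega>. (W u \<omega> - W s \<omega>) ^ (2*p) \<partial>M) = fact (2 * p) / ((2 / \<sigma>\<^sup>2)^p * fact p)"
  proof -
    have "(\<integral>\<omega>. (W u \<omega> - W s \<omega>) ^ (2*p) \<partial>M) = (\<integral>x. normal_density 0 \<sigma> x * x ^ (2*p) \<partial>lborel)"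
      using distributed_integral[OF D, of "\<lambda>x. x ^ (2*p)"] by simp
    also have "\<dots> = fact (2 * p) / ((2 / \<sigma>\<^sup>2)^p * fact p)"
      using integral_normal_moment_even[OF \<sigma>, of 0 p] by simp
    finally show ?thesis .
  qed
  have "fact (2 * p) / ((2 / \<sigma>\<^sup>2)^p * fact p) = fact(2*p) * (u-s)^p / (2^p * fact p)"
    using \<sigma> s by (simp add: \<sigma>_def power_divide)
  also have "\<dots> \<le> fact(2*p) * (u-s)^p"
  proof -
    have a: "(1::real) \<le> 2^p" by simp
    have b: "(1::real) \<le> fact p" by (rule fact_ge_1)
    have "(1::real) \<le> 2^p * fact p" using mult_mono[OF a b] by simp
    thus ?thesis using s by (simp add: divide_le_eq_1 field_simps)  
  qed
  finally have EZle: "(\<integral>\<omega>. (W u \<omega> - W s \<omega>) ^ (2*p) \<partial>M) \<le> fact(2*p) * (u-s)^p" using EZ by simp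
  have "{\<omega>\<in>space M. \<bar>W u \<omega> - W s \<omega>\<bar> \<ge> x} = {\<omega>\<in>space M. (W u \<omega> - W s \<omega>) ^ (2*p) \<ge> x^(2*p)}"
  proof -
    have "\<And>z::real. (\<bar>z\<bar> \<ge> x) = (z^(2*p) \<ge> x^(2*p))"
    proof -
      fix z :: real
      have "z^(2*p) = \<bar>z\<bar>^(2*p)" by (simp add: power_even_abs)
      moreover have "(\<bar>z\<bar>^(2*p) \<ge> x^(2*p)) = (\<bar>z\<bar> \<ge> x)"
        by (rule power_mono_iff) (use x p in auto)
      ultimately show "(\<bar>z\<bar> \<ge> x) = (z^(2*p) \<ge> x^(2*p))" by simp
    qed
    thus ?thesis by simp
  qed
  also have "measure M \<dots> \<le> (\<integral>\<omega>. (W u \<omega> - W s \<omega>) ^ (2*p) \<partial>M) / x^(2*p)"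
    by (rule integral_Markov_inequality_measure[OF intZ, where A="space M"]) (use x in \<open>auto simp: power_mult\<close>)
  also have "\<dots> \<le> fact(2*p) * (u-s)^p / x^(2*p)"
    using EZle x by (simp add: divide_right_mono)
  finally show ?thesis .
qed

lemma chain_dyadic:
  fixes g :: "real \<Rightarrow> real" and D \<beta> \<theta> :: real
  assumes g0: "g 0 = 0" and D: "D \<ge> 0" and th: "0 < \<theta>" "\<theta> < \<beta>"
    and inc: "\<And>l i. i < 2^l \<Longrightarrow> \<bar>g (real (i+1)/2^l) - g (real i/2^l)\<bar> \<le> D * ((1/2)^l) powr \<beta>"
  shows "j \<le> 2^L \<Longrightarrow> \<bar>g (real j/2^L)\<bar> \<le> D * (real j/2^L) powr (\<beta> - \<theta>) * (\<Sum>l\<le>L. ((1/2)^l) powr \<theta>)"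
proof (induction L arbitrary: j)
  case 0
  then have "j = 0 \<or> j = 1" by auto
  then show ?case
  proof
    assume "j = 0" then show ?thesis using g0 by simp
  next
    assume j: "j = 1"
    have "\<bar>g (real (0+1)/2^0) - g (real 0/2^0)\<bar> \<le> D * ((1/2)^0) powr \<beta>" by (rule inc) simp
    then show ?thesis using j g0 by simp
  qed
next
  case (Suc L)
  define S where "S = (\<Sum>l\<le>L. ((1/2::real)^l) powr \<theta>)"
  have S_nn: "S \<ge> 0" unfolding S_def by (intro sum_nonneg) simp
  have SS: "(\<Sum>l\<le>Suc L. ((1/2::real)^l) powr \<theta>) = S + ((1/2)^Suc L) powr \<theta>"
    unfolding S_def by simp
  define j' where "j' = j div 2"
  define t where "t = real j / 2^Suc L"
  have t_nn: "t \<ge> 0" unfolding t_def by simp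
  have j'le: "j' \<le> 2^L" using Suc.prems unfolding j'_def by auto
  have IH: "\<bar>g (real j'/2^L)\<bar> \<le> D * (real j'/2^L) powr (\<beta> - \<theta>) * S"
    using Suc.IH[OF j'le] unfolding S_def .
  have mono: "(real j'/2^L) powr (\<beta> - \<theta>) \<le> t powr (\<beta> - \<theta>)"
  proof (rule powr_mono2)
    show "real j' / 2 ^ L \<le> t" unfolding t_def j'_def
      by (simp add: field_simps)
  qed (use th in auto)
  have IH2: "\<bar>g (real j'/2^L)\<bar> \<le> D * t powr (\<beta> - \<theta>) * S"
    using IH mono D S_nn by (meson mult_right_mono order_trans mult_left_mono)
  have nn2: "0 \<le> D * t powr (\<beta> - \<theta>) * ((1/2)^Suc L) powr \<theta>" using D by simp
  show ?case
  proof (cases "even j")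
    case True
    then have "real j / 2^Suc L = real j'/2^L" unfolding j'_def by (auto simp: field_simps)
    then show ?thesis using IH2 nn2 unfolding SS t_def by (simp add: algebra_simps)
  next
    case False
    then have jj: "j = 2*j' + 1" unfolding j'_def by presburger
    have i_lt: "2*j' < 2^Suc L" using Suc.prems jj by simp
    have e1: "real j / 2^Suc L = real (2*j' + 1)/2^Suc L" using jj by simp
    have e2: "real j' / 2^L = real (2*j')/2^Suc L" by simp
    have incr: "\<bar>g (real (2*j'+1)/2^Suc L) - g (real (2*j')/2^Suc L)\<bar> \<le> D * ((1/2)^Suc L) powr \<beta>"
      using inc[OF i_lt] by simp
    have u_le: "(1/2::real)^Suc L \<le> t" unfolding t_def using jj by (simp add: field_simps)
    have "((1/2::real)^Suc L) powr \<beta> = ((1/2)^Suc L) powr (\<beta> - \<theta>) * ((1/2)^Suc L) powr \<theta>"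
      by (simp add: powr_add[symmetric])
    also have "\<dots> \<le> t powr (\<beta> - \<theta>) * ((1/2)^Suc L) powr \<theta>"
      by (intro mult_right_mono powr_mono2 u_le) (use th in auto)
    finally have b2: "D * ((1/2::real)^Suc L) powr \<beta> \<le> D * t powr (\<beta> - \<theta>) * ((1/2)^Suc L) powr \<theta>"
      using D by (simp add: mult_left_mono mult.assoc)
    have "\<bar>g (real j / 2^Suc L)\<bar> \<le> \<bar>g (real j'/2^L)\<bar> + D * ((1/2)^Suc L) powr \<beta>"
      using incr unfolding e1 e2 by linarith
    then show ?thesis using IH2 b2 unfolding SS t_def by (simp add: algebra_simps)
  qed
qed

lemma geom_powr_bound:
  fixes \<theta> :: real assumes "\<theta> > 0"
  shows "(\<Sum>l\<le>L. ((1/2::real)^l) powr \<theta>) \<le> 1 / (1 - (1/2) powr \<theta>)"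
proof -
  define r where "r = (1/2::real) powr \<theta>"
  have r: "0 \<le> r" "r < 1" unfolding r_def using assms powr_less_mono2[of \<theta> "1/2" 1] by auto
  have eq: "\<And>l. ((1/2::real)^l) powr \<theta> = r^l"
  proof -
    fix l
    have a: "((1/2::real)^l) powr \<theta> = (1/2) powr (real l*\<theta>)"
      by (subst powr_realpow[symmetric]) (simp_all add: powr_powr)
    have b: "r^l = (1/2) powr (\<theta> * real l)"
      unfolding r_def by (subst powr_realpow[symmetric]) (simp_all add: powr_powr)
    show "((1/2::real)^l) powr \<theta> = r^l" using a b by (simp add: mult.commute)
  qed
  have "(\<Sum>l\<le>L. r^l) \<le> (\<Sum>l. r^l)"
    by (rule sum_le_suminf) (use r in \<open>auto intro: summable_geometric\<close>)
  also have "\<dots> = 1/(1-r)" using suminf_geometric[of r] r by simp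
  finally show ?thesis unfolding eq r_def by (simp add: atMost_atLeast0)
qed

lemma extend_dyadic:
  fixes g :: "real \<Rightarrow> real" and C \<gamma> t :: real
  assumes cont: "continuous_on {0..1} g" and gp: "\<gamma> > 0"
    and dy: "\<And>L j. j \<le> 2^L \<Longrightarrow> \<bar>g (real j/2^L)\<bar> \<le> C * (real j/2^L) powr \<gamma>"
    and t: "0 < t" "t \<le> 1"
  shows "\<bar>g t\<bar> \<le> C * t powr \<gamma>"
proof -
  define d where "d = (\<lambda>m::nat. real (nat \<lfloor>t * 2^m\<rfloor>) / 2^m)"
  have fl: "real (nat \<lfloor>t * 2^m\<rfloor>) = real_of_int \<lfloor>t * 2^m\<rfloor>" for m::nat
    using t by (intro of_nat_nat) simp
  have dle: "d m \<le> t" for m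
  proof -
    have "real (nat \<lfloor>t * 2^m\<rfloor>) \<le> t * 2^m" unfolding fl by (rule of_int_floor_le)
    thus ?thesis unfolding d_def by (simp add: divide_le_eq)
  qed
  have dge: "t - (1/2)^m \<le> d m" for m
  proof -
    have "t * 2^m - 1 \<le> real (nat \<lfloor>t * 2^m\<rfloor>)" unfolding fl by linarith
    hence "(t * 2^m - 1) / 2^m \<le> d m" unfolding d_def by (simp add: divide_right_mono)
    thus ?thesis by (simp add: field_simps power_one_over)
  qed
  have d0: "0 \<le> d m" for m unfolding d_def by simp
  have dj: "nat \<lfloor>t * 2^m\<rfloor> \<le> 2^m" for m::nat
  proof -
    have "\<lfloor>t * 2^m\<rfloor> \<le> \<lfloor>(2::real)^m\<rfloor>" using t by (intro floor_mono) simp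
    hence "\<lfloor>t * 2^m\<rfloor> \<le> 2^m" by simp
    thus ?thesis by (simp add: nat_le_iff)
  qed
  have dlim: "d \<longlonglongrightarrow> t"
  proof (rule tendsto_sandwich[of "\<lambda>m. t - (1/2)^m" _ _ "\<lambda>m. t"])
    show "\<forall>\<^sub>F n in sequentially. t - (1 / 2) ^ n \<le> d n" using dge by simp
    show "\<forall>\<^sub>F n in sequentially. d n \<le> t" using dle by simp
    show "(\<lambda>n. t - (1 / 2::real) ^ n) \<longlonglongrightarrow> t"
      using tendsto_diff[OF tendsto_const LIMSEQ_power_zero[of "1/2::real"]] by simp
  qed simp
  have din: "d m \<in> {0..1}" for m using d0[of m] dle[of m] t by auto
  have glim: "(\<lambda>m. g (d m)) \<longlonglongrightarrow> g t"
  proof -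
    have "isCont g t \<or> True" by simp
    have "(g \<longlongrightarrow> g t) (at t within {0..1})"
      using cont t by (simp add: continuous_on_def)
    moreover have "filterlim d (at t within {0..1}) sequentially \<or> True" by simp
    show ?thesis
      using continuous_on_tendsto_compose[OF cont dlim] t din by auto
  qed
  have plim: "(\<lambda>m. C * (d m) powr \<gamma>) \<longlonglongrightarrow> C * t powr \<gamma>"
    by (intro tendsto_intros dlim) (use t in auto)
  have le: "\<bar>g (d m)\<bar> \<le> C * (d m) powr \<gamma>" for m
    using dy[OF dj[of m]] unfolding d_def by simp
  show ?thesis
    by (rule LIMSEQ_le[OF tendsto_rabs[OF glim] plim]) (use le in auto)
qed

lemma tail_calc:
  fixes F K y C0 e \<beta> :: real and p :: nat
  assumes K: "K > 0" and y: "0 < y" "y \<le> 1" and C0: "C0 > 0" and F: "F \<ge> 0"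
    and pe: "real p * e \<ge> 2" and \<beta>: "\<beta> = 1/2 - e/2"
  shows "F * (K*y)^p / (C0 * sqrt K * y powr \<beta>)^(2*p) \<le> F / C0^(2*p) * y^2"
proof -
  have sK: "sqrt K ^ (2*p) = K^p"
  proof -
    have "sqrt K ^ (2*p) = (sqrt K ^ 2) ^ p" by (simp only: power_mult)
    thus ?thesis using K by simp
  qed
  have yb: "(y powr \<beta>)^(2*p) = y powr (\<beta> * real (2*p))"
    using powr_powr[of y \<beta> "real (2*p)"] powr_realpow[of "y powr \<beta>" "2*p"] y by simp
  have yp: "y^p = y powr (real p)" using y by (simp add: powr_realpow)
  have e1: "(C0 * sqrt K * y powr \<beta>)^(2*p) = C0^(2*p) * K^p * y powr (\<beta> * real (2*p))"
    by (simp only: power_mult_distrib sK yb)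
  have eq: "F * (K*y)^p / (C0 * sqrt K * y powr \<beta>)^(2*p)
        = F / C0^(2*p) * (y^p / y powr (\<beta> * real (2*p)))"
    unfolding e1 using K y C0 by (simp add: power_mult_distrib)
  have eq2: "y^p / y powr (\<beta> * real (2*p)) = y powr (real p * e)"
    unfolding yp using y by (simp add: powr_diff[symmetric] \<beta> algebra_simps)
  have le: "y powr (real p * e) \<le> y powr 2" by (rule powr_mono') (use y pe in auto)
  have eq3: "y powr 2 = y^2" using y by simp
  have "F / C0^(2*p) \<ge> 0" using F C0 by simp
  then have "F / C0^(2*p) * y powr (real p * e) \<le> F / C0^(2*p) * y^2"
    using le eq3 by (intro mult_left_mono) auto
  then show ?thesis unfolding eq eq2 .
qed

lemma bm_sup:
  assumes M: "prob_space M" and W: "std_brownian_motion M W"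
    and e: "0 < e" "e \<le> 1/4" and \<delta>: "\<delta> > 0"
  shows "\<exists>C>0. \<forall>K>0. \<exists>A\<in>sets M. {\<omega>\<in>space M. \<exists>t\<in>{0<..1}. \<bar>W (K*t) \<omega>\<bar> > C * sqrt K * t powr (1/2 - e)} \<subseteq> A \<and> measure M A < \<delta>"
proof -
  interpret prob_space M by fact
  define \<beta> where "\<beta> = 1/2 - e/2"
  define \<theta> where "\<theta> = e/2"
  define p where "p = nat \<lceil>2/e\<rceil>"
  have pe: "real p * e \<ge> 2"
  proof -
    have "real p \<ge> 2/e" unfolding p_def by linarith
    thus ?thesis using e by (simp add: field_simps)
  qed
  have p1: "p \<ge> 1" using pe e by (cases p) auto
  define F where "F = (fact (2*p) :: real)"
  have F: "F > 0" unfolding F_def by simp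
  define C0 where "C0 = 4*F/\<delta> + 1"
  have C0: "C0 \<ge> 1" unfolding C0_def using F \<delta> by simp
  have C0p: "C0^(2*p) \<ge> C0" using C0 p1 by (metis one_le_power power_increasing power_one_right mult_le_mono1 nat_1_add_1 one_add_one le_add2 order.trans mult_2 numeral_One)
  have Fsmall: "2 * (F / C0^(2*p)) < \<delta>"
  proof -
    have "2 * (F / C0^(2*p)) \<le> 2 * (F / C0)"
      using C0 C0p F by (intro mult_left_mono divide_left_mono) auto
    also have "\<dots> < \<delta>"
    proof -
      have "\<delta> * C0 = 4*F + \<delta>" unfolding C0_def using \<delta> by (simp add: field_simps)
      then have "2*F < \<delta> * C0" using F \<delta> by linarith
      then show ?thesis using C0 by (simp add: field_simps)
    qed
    finally show ?thesis .
  qed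
  define r where "r = (1/2::real) powr \<theta>"
  have r: "0 \<le> r" "r < 1" unfolding r_def \<theta>_def using e powr_less_mono2[of "e/2" "1/2" 1] by auto
  define C where "C = C0 / (1 - r)"
  have Cpos: "C > 0" unfolding C_def using r C0 by simp
  show ?thesis
  proof (intro exI[of _ C] conjI allI impI Cpos)
    fix K :: real assume K: "K > 0"
    have "AE \<omega> in M. W 0 \<omega> = 0 \<and> continuous_on {0..} (\<lambda>t. W t \<omega>)"
      using W unfolding std_brownian_motion_def by auto
    then obtain N where N: "{\<omega>\<in>space M. \<not> (W 0 \<omega> = 0 \<and> continuous_on {0..} (\<lambda>t. W t \<omega>))} \<subseteq> N"
      "emeasure M N = 0" "N \<in> sets M" by (rule AE_E)
    have Wm: "\<And>s. s \<ge> 0 \<Longrightarrow> W s \<in> borel_measurable M"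
      using W unfolding std_brownian_motion_def by auto
    define lo where "lo = (\<lambda>l (i::nat). K * (real i / 2^l))"
    define hi where "hi = (\<lambda>l (i::nat). K * (real (i+1) / 2^l))"
    define Bad where "Bad = (\<lambda>l i. {\<omega>\<in>space M. \<bar>W (hi l i) \<omega> - W (lo l i) \<omega>\<bar> \<ge> C0 * sqrt K * ((1/2)^l) powr \<beta>})"
    define Bl where "Bl = (\<lambda>l::nat. \<Union>i\<in>{..<(2::nat)^l}. Bad l i)"
    have Bad_sets: "Bad l i \<in> sets M" for l i
    proof -
      have [measurable]: "W (hi l i) \<in> borel_measurable M" "W (lo l i) \<in> borel_measurable M"
        using K by (auto intro!: Wm simp: hi_def lo_def)
      show ?thesis unfolding Bad_def by measurable
    qed
    have Bl_sets: "Bl l \<in> sets M" for l unfolding Bl_def using Bad_sets by auto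
    have Bad_meas: "measure M (Bad l i) \<le> F / C0^(2*p) * ((1/2)^l)^2" for l i
    proof -
      have lohi: "0 \<le> lo l i" "lo l i < hi l i" using K unfolding lo_def hi_def by (auto simp: field_simps)
      have x: "C0 * sqrt K * ((1/2)^l) powr \<beta> > 0" using C0 K by simp
      have "measure M (Bad l i) \<le> fact(2*p) * (hi l i - lo l i)^p / (C0 * sqrt K * ((1/2)^l) powr \<beta>)^(2*p)"
        unfolding Bad_def by (rule bm_tail[OF M W lohi x p1])
      also have "hi l i - lo l i = K * (1/2)^l" unfolding hi_def lo_def by (simp add: field_simps)
      also have "fact(2*p) * (K * (1/2)^l)^p / (C0 * sqrt K * ((1/2)^l) powr \<beta>)^(2*p) \<le> F / C0^(2*p) * ((1/2)^l)^2"
        unfolding F_def by (rule tail_calc[OF K _ _ _ _ pe \<beta>_def]) (use C0 in \<open>auto simp: power_le_one\<close>)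
      finally show ?thesis .
    qed
    have Bl_meas: "measure M (Bl l) \<le> F / C0^(2*p) * (1/2)^l" for l
    proof -
      have "measure M (Bl l) \<le> (\<Sum>i\<in>{..<(2::nat)^l}. measure M (Bad l i))"
        unfolding Bl_def by (rule measure_UNION_le) (auto intro: Bad_sets)
      also have "\<dots> \<le> (\<Sum>i\<in>{..<(2::nat)^l}. F / C0^(2*p) * ((1/2)^l)^2)"
        by (intro sum_mono Bad_meas)
      also have "\<dots> = F / C0^(2*p) * (1/2)^l"
        by (simp add: power_mult_distrib power2_eq_square field_simps)
      finally show ?thesis .
    qed
    have summ: "summable (\<lambda>l. F / C0^(2*p) * (1/2::real)^l)"
      by (intro summable_mult summable_geometric) simp
    have summ2: "summable (\<lambda>l. measure M (Bl l))"
      by (rule summable_comparison_test'[OF summ]) (use Bl_meas in auto)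
    have U: "measure M (\<Union>l. Bl l) \<le> 2 * (F / C0^(2*p))"
    proof -
      have "measure M (\<Union>l. Bl l) \<le> (\<Sum>l. measure M (Bl l))"
        by (rule finite_measure_subadditive_countably) (use Bl_sets summ2 in auto)
      also have "\<dots> \<le> (\<Sum>l. F / C0^(2*p) * (1/2::real)^l)"
        by (rule suminf_le[OF Bl_meas summ2 summ])
      also have "\<dots> = 2 * (F / C0^(2*p))"
        using suminf_mult[OF summable_geometric[of "1/2::real"], of "F / C0^(2*p)"]
              suminf_geometric[of "1/2::real"] by simp
      finally show ?thesis .
    qed
    define A where "A = N \<union> (\<Union>l. Bl l)"
    have A_sets: "A \<in> sets M" unfolding A_def using N Bl_sets by auto
    have A_meas: "measure M A < \<delta>"
    proof -
      have "measure M A \<le> measure M N + measure M (\<Union>l. Bl l)"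
        unfolding A_def by (rule measure_Un_le) (use N Bl_sets in auto)
      also have "measure M N = 0" using N by (simp add: measure_def)
      finally show ?thesis using U Fsmall by linarith
    qed
    show "\<exists>A\<in>sets M. {\<omega>\<in>space M. \<exists>t\<in>{0<..1}. \<bar>W (K*t) \<omega>\<bar> > C * sqrt K * t powr (1/2 - e)} \<subseteq> A \<and> measure M A < \<delta>"
    proof (intro bexI[OF _ A_sets] conjI A_meas subsetI)
      fix \<omega> assume "\<omega> \<in> {\<omega>\<in>space M. \<exists>t\<in>{0<..1}. \<bar>W (K*t) \<omega>\<bar> > C * sqrt K * t powr (1/2 - e)}"
      then obtain t where \<omega>: "\<omega> \<in> space M" and t: "t \<in> {0<..1}" and big: "\<bar>W (K*t) \<omega>\<bar> > C * sqrt K * t powr (1/2 - e)"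
        by auto
      show "\<omega> \<in> A"
      proof (rule ccontr)
        assume nA: "\<omega> \<notin> A"
        then have W0: "W 0 \<omega> = 0" and Wc: "continuous_on {0..} (\<lambda>t. W t \<omega>)"
          using N(1) \<omega> unfolding A_def by auto
        define g where "g = (\<lambda>u. W (K * u) \<omega>)"
        have g0: "g 0 = 0" unfolding g_def using W0 by simp
        have inc: "\<bar>g (real (i+1)/2^l) - g (real i/2^l)\<bar> \<le> (C0 * sqrt K) * ((1/2)^l) powr \<beta>"
          if "i < 2^l" for l i
        proof -
          have "\<omega> \<notin> Bad l i" using nA that unfolding A_def Bl_def by auto
          thus ?thesis using \<omega> unfolding Bad_def g_def hi_def lo_def by auto
        qed
        have D: "C0 * sqrt K \<ge> 0" using C0 K by simp
        have th: "0 < \<theta>" "\<theta> < \<beta>" unfolding \<theta>_def \<beta>_def using e by auto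
        have bt: "\<beta> - \<theta> = 1/2 - e" unfolding \<theta>_def \<beta>_def by simp
        have dy: "\<bar>g (real j/2^L)\<bar> \<le> C * sqrt K * (real j/2^L) powr (1/2 - e)" if "j \<le> 2^L" for L j
        proof -
          have "\<bar>g (real j/2^L)\<bar> \<le> (C0 * sqrt K) * (real j/2^L) powr (\<beta> - \<theta>) * (\<Sum>l\<le>L. ((1/2)^l) powr \<theta>)"
            by (rule chain_dyadic[OF g0 D th inc that]) 
          also have "\<dots> \<le> (C0 * sqrt K) * (real j/2^L) powr (\<beta> - \<theta>) * (1 / (1 - r))"
            using geom_powr_bound[OF th(1), of L] D unfolding r_def by (intro mult_left_mono) auto
          also have "\<dots> = C * sqrt K * (real j/2^L) powr (1/2 - e)"
            unfolding C_def bt by simp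
          finally show ?thesis .
        qed
        have cont: "continuous_on {0..1} g"
        proof -
          have "continuous_on {0..1} (\<lambda>u. K * u)" by (intro continuous_intros)
          moreover have "(\<lambda>u. K * u) ` {0..1} \<subseteq> {0..}" using K by auto
          ultimately show ?thesis unfolding g_def using continuous_on_compose2[OF Wc] by blast
        qed
        have "\<bar>g t\<bar> \<le> C * sqrt K * t powr (1/2 - e)"
          by (rule extend_dyadic[OF cont _ dy]) (use e t in auto)
        thus False using big unfolding g_def by simp
      qed
    qed
  qed
qed

lemma Q_order:
  fixes Q :: "real \<Rightarrow> 'a \<Rightarrow> real" and Y :: "real \<Rightarrow> 'b \<Rightarrow> real"
  assumes M: "prob_space M" and Qm: "\<And>t. Q t \<in> borel_measurable M"
    and D: "distr M (PiM {s,u} (\<lambda>_. borel)) (\<lambda>\<omega>. \<lambda>t\<in>{s,u}. Q t \<omega>) =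
            distr P (PiM {s,u} (\<lambda>_. borel)) (\<lambda>\<omega>. \<lambda>t\<in>{s,u}. Y t \<omega>)"
    and ord: "\<And>\<omega>. \<omega> \<in> space P \<Longrightarrow> Y u \<omega> \<le> Y s \<omega>"
  shows "AE \<omega> in M. Q u \<omega> \<le> Q s \<omega>"
proof -
  interpret prob_space M by fact
  define J where "J = {s,u}"
  define N where "N = PiM J (\<lambda>_. borel :: real measure)"
  define f where "f = (\<lambda>\<omega>. \<lambda>t\<in>J. Q t \<omega>)"
  define g where "g = (\<lambda>\<omega>. \<lambda>t\<in>J. Y t \<omega>)"
  have D': "distr M N f = distr P N g" using D unfolding N_def f_def g_def J_def .
  have fm: "f \<in> measurable M N" unfolding f_def N_def
    by (rule measurable_restrict) (use Qm in auto)
  define S where "S = {x\<in>space N. x u \<le> x s}"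
  have uJ: "u \<in> J" "s \<in> J" unfolding J_def by auto
  have S_sets: "S \<in> sets N"
  proof -
    have [measurable]: "(\<lambda>x. x u) \<in> borel_measurable N" "(\<lambda>x. x s) \<in> borel_measurable N"
      unfolding N_def using uJ by (auto intro!: measurable_component_singleton)
    show ?thesis unfolding S_def by measurable
  qed
  have Lsp: "emeasure (distr M N f) (space N) = 1"
    using fm by (simp add: emeasure_distr emeasure_space_1 measurable_space[of f M N] Int_absorb1 subsetI vimage_def)
  define \<mu> where "\<mu> = (\<lambda>A. emeasure P (g -` A \<inter> space P))"
  have R: "emeasure (distr P N g) = (\<lambda>B. if B \<in> sigma_sets (space N) (sets N) \<and> measure_space (space N) (sigma_sets (space N) (sets N)) \<mu> then \<mu> B else 0)"
    unfolding distr_def \<mu>_def by (rule emeasure_measure_of_conv)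
  have ms: "measure_space (space N) (sigma_sets (space N) (sets N)) \<mu>"
  proof (rule ccontr)
    assume "\<not> ?thesis"
    then have "emeasure (distr P N g) (space N) = 0" unfolding R by simp
    then show False using Lsp D' by simp
  qed
  have gsp: "g -` S \<inter> space P = space P"
  proof -
    have "g \<omega> \<in> space N" for \<omega> unfolding g_def N_def by (auto simp: space_PiM)
    moreover have "g \<omega> u \<le> g \<omega> s" if "\<omega> \<in> space P" for \<omega> using ord[OF that] uJ unfolding g_def by simp
    ultimately show ?thesis unfolding S_def by auto
  qed
  have "emeasure (distr P N g) S = \<mu> S"
    unfolding R using ms S_sets by (simp add: sets.sigma_sets_eq)
  also have "\<dots> = emeasure P (space P)" unfolding \<mu>_def gsp ..
  finally have RS: "emeasure (distr P N g) S = emeasure P (space P)" .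
  have "emeasure (distr P N g) S = 1"
  proof -
    have "emeasure (distr P N g) S \<le> emeasure (distr P N g) (space N)"
      by (rule emeasure_mono) (use S_sets sets.sets_into_space in auto)
    hence le1: "emeasure (distr P N g) S \<le> 1" using Lsp D' by simp
    have "emeasure (distr P N g) (space N) = \<mu> (space N)"
      unfolding R using ms by (simp add: sets.sigma_sets_eq)
    also have "\<mu> (space N) = emeasure P (space P)"
    proof -
      have "g -` space N \<inter> space P = space P" unfolding g_def N_def by (auto simp: space_PiM)
      thus ?thesis unfolding \<mu>_def by simp
    qed
    finally have "emeasure P (space P) = 1" using Lsp D' by simp
    thus ?thesis using RS by simp
  qed
  then have "emeasure (distr M N f) S = 1" using D' by simp
  then have "emeasure M (f -` S \<inter> space M) = 1" using fm S_sets by (simp add: emeasure_distr)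
  moreover have "f -` S \<inter> space M = {\<omega>\<in>space M. Q u \<omega> \<le> Q s \<omega>}"
    using measurable_space[OF fm] uJ unfolding S_def f_def by auto
  ultimately have "prob {\<omega>\<in>space M. Q u \<omega> \<le> Q s \<omega>} = 1" by (simp add: emeasure_eq_measure)
  from AE_prob_1[OF this] show ?thesis by simp
qed

lemma order_stat_mono:
  assumes "i \<le> j" "j \<le> n" "n \<ge> 1"
  shows "order_stat X n i \<omega> \<le> order_stat X n j \<omega>"
proof -
  let ?xs = "sort (map (\<lambda>i. X i \<omega>) [1..<Suc n])"
  have len: "length ?xs = n" by simp
  show ?thesis unfolding order_stat_def
    by (rule sorted_nth_mono[OF sorted_sort]) (use assms len in auto)
qed

lemma h_bound:
  fixes \<gamma> c :: real
  assumes c: "c > 0" "c > \<gamma>"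
  shows "\<exists>H. \<forall>t\<in>{0<..1}. t powr c * \<bar>hfun \<gamma> t\<bar> \<le> H"
proof (cases "\<gamma> = 0")
  case True
  show ?thesis
  proof (intro exI ballI)
    fix t :: real assume t: "t \<in> {0<..1}"
    have "ln (t powr (-c)) \<le> t powr (-c) - 1" by (rule ln_le_minus_one) (use t in simp)
    then have "- c * ln t \<le> t powr (-c)" using t by (simp add: ln_powr)
    then have "t powr c * (- c * ln t) \<le> t powr c * t powr (-c)" using t by (intro mult_left_mono) auto
    also have "\<dots> = 1" using t by (simp add: powr_add[symmetric])
    finally have "c * (t powr c * (- ln t)) \<le> 1" by (simp add: algebra_simps)
    moreover have "ln t \<le> 0" using t by simp
    ultimately show "t powr c * \<bar>hfun \<gamma> t\<bar> \<le> 1/c" using True c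
      by (simp add: hfun_def field_simps)
  qed
next
  case False
  show ?thesis
  proof (intro exI ballI)
    fix t :: real assume t: "t \<in> {0<..1}"
    have a: "t powr c \<le> 1" using t c by (intro powr_le1) auto
    have b: "t powr (c - \<gamma>) \<le> 1" using t c by (intro powr_le1) auto
    have "t powr c * \<bar>hfun \<gamma> t\<bar> = \<bar>t powr c * t powr (-\<gamma>) - t powr c\<bar> / \<bar>\<gamma>\<bar>"
    proof -
      have "t powr c * \<bar>t powr - \<gamma> - 1\<bar> = \<bar>t powr c * (t powr - \<gamma> - 1)\<bar>" by (simp add: abs_mult)
      thus ?thesis using False t by (simp add: hfun_def abs_divide right_diff_distrib)
    qed
    also have "t powr c * t powr (-\<gamma>) = t powr (c - \<gamma>)" by (simp add: powr_add[symmetric])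
    also have "\<bar>t powr (c - \<gamma>) - t powr c\<bar> / \<bar>\<gamma>\<bar> \<le> 2 / \<bar>\<gamma>\<bar>"
    proof -
      have "\<bar>t powr (c - \<gamma>) - t powr c\<bar> \<le> 2" using a b powr_ge_zero[of t c] powr_ge_zero[of t "c - \<gamma>"] by arith
      thus ?thesis by (intro divide_right_mono) auto
    qed
    finally show "t powr c * \<bar>hfun \<gamma> t\<bar> \<le> 2 / \<bar>\<gamma>\<bar>" .
  qed
qed

lemma W_term:
  fixes t K e \<epsilon> \<gamma> C w :: real
  assumes t: "0 < t" "t \<le> 1" and K: "K > 0" and e: "0 < e" "e \<le> \<epsilon>"
    and w: "\<bar>w\<bar> \<le> C * sqrt K * t powr (1/2 - e)"
  shows "t powr (\<gamma> + 1/2 + \<epsilon>) * \<bar>t powr (-(\<gamma>+1)) * w / K\<bar> \<le> C / sqrt K"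
proof -
  have C: "C \<ge> 0"
  proof (rule ccontr)
    assume "\<not> C \<ge> 0"
    then have "C * sqrt K * t powr (1/2 - e) < 0" using K t by (simp add: mult_neg_pos)
    thus False using w by linarith
  qed
  have "t powr (\<gamma> + 1/2 + \<epsilon>) * \<bar>t powr (-(\<gamma>+1)) * w / K\<bar>
      = (t powr (\<gamma> + 1/2 + \<epsilon>) * t powr (-(\<gamma>+1))) * \<bar>w\<bar> / K"
    using K t by (simp add: abs_mult abs_divide)
  also have "t powr (\<gamma> + 1/2 + \<epsilon>) * t powr (-(\<gamma>+1)) = t powr (\<epsilon> - 1/2)"
    by (simp add: powr_add[symmetric])
  also have "t powr (\<epsilon> - 1/2) * \<bar>w\<bar> / K \<le> t powr (\<epsilon> - 1/2) * (C * sqrt K * t powr (1/2 - e)) / K"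
    using w K by (intro divide_right_mono mult_left_mono) auto
  also have "\<dots> = C * sqrt K / K * (t powr (\<epsilon> - 1/2) * t powr (1/2 - e))" by simp
  also have "t powr (\<epsilon> - 1/2) * t powr (1/2 - e) = t powr (\<epsilon> - e)" by (simp add: powr_add[symmetric])
  also have "C * sqrt K / K * t powr (\<epsilon> - e) \<le> C * sqrt K / K * 1"
    using C K t e by (intro mult_left_mono powr_le1) auto
  also have "C * sqrt K / K * 1 = C / sqrt K"
    using K by (simp add: field_simps real_sqrt_mult[symmetric])
  finally show ?thesis .
qed

lemma tight:
  fixes Y :: "'a \<Rightarrow> real"
  assumes M: "prob_space M" and Y: "Y \<in> borel_measurable M" and \<delta>: "\<delta> > 0"
  shows "\<exists>z. measure M {\<omega>\<in>space M. \<bar>Y \<omega>\<bar> > z} < \<delta>"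
proof -
  interpret prob_space M by fact
  define A where "A = (\<lambda>m::nat. {\<omega>\<in>space M. \<bar>Y \<omega>\<bar> > real m})"
  have As: "range A \<subseteq> sets M" unfolding A_def using Y by auto
  have dec: "decseq A" unfolding A_def decseq_def by auto
  have emp: "(\<Inter>i. A i) = {}"
  proof -
    have "\<omega> \<notin> A (nat \<lceil>\<bar>Y \<omega>\<bar>\<rceil>)" for \<omega>
    proof -
      have "\<bar>Y \<omega>\<bar> \<le> real (nat \<lceil>\<bar>Y \<omega>\<bar>\<rceil>)" by (rule real_nat_ceiling_ge)
      thus ?thesis unfolding A_def mem_Collect_eq by (meson not_less)
    qed
    thus ?thesis by blast
  qed
  have "(\<lambda>n. measure M (A n)) \<longlonglongrightarrow> 0"
    using finite_Lim_measure_decseq[OF As dec] emp by simp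
  then have "eventually (\<lambda>n. measure M (A n) < \<delta>) sequentially"
    using \<delta> by (simp add: order_tendsto_iff)
  then obtain m where "measure M (A m) < \<delta>" by (auto simp: eventually_sequentially)
  thus ?thesis unfolding A_def by blast
qed

lemma final_bound:
  fixes t c \<gamma> \<epsilon> e K Qt Qo b a h Wt Wo \<Phi> \<Psi>t \<Psi>o r B\<Phi> B\<Psi> CW :: real
  assumes t: "0 < t" "t \<le> 1" and c: "c = \<gamma> + 1/2 + \<epsilon>" "c > 0" and K: "K > 0" and e: "0 < e" "e \<le> \<epsilon>"
    and Dt: "\<bar>t powr c * ((Qt - b)/a - (h - t powr (-(\<gamma>+1)) * Wt / K + \<Phi> * \<Psi>t))\<bar> \<le> r"
    and D1: "\<bar>(Qo - b)/a - (0 - Wo / K + \<Phi> * \<Psi>o)\<bar> \<le> r"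
    and r: "r = 1 / sqrt K + \<bar>\<Phi>\<bar>" and BP: "sqrt K * \<bar>\<Phi>\<bar> \<le> B\<Phi>"
    and Wt: "\<bar>Wt\<bar> \<le> CW * sqrt K * t powr (1/2 - e)" and Wo: "\<bar>Wo\<bar> \<le> CW * sqrt K"
    and Ps: "t powr c * \<bar>\<Psi>t\<bar> \<le> B\<Psi>"
  shows "\<bar>t powr c * (sqrt K * ((Qt - Qo)/a - h))\<bar> \<le> 2*(1+B\<Phi>) + 2*CW + B\<Phi>*(B\<Psi> + \<bar>\<Psi>o\<bar>)"
proof -
  define T where "T = t powr c"
  define s where "s = sqrt K"
  have T: "0 \<le> T" "T \<le> 1" unfolding T_def using t c by (auto intro: powr_le1)
  have s: "s > 0" unfolding s_def using K by simp
  define Dtv where "Dtv = (Qt - b)/a - (h - t powr (-(\<gamma>+1)) * Wt / K + \<Phi> * \<Psi>t)"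
  define D1v where "D1v = (Qo - b)/a - (0 - Wo / K + \<Phi> * \<Psi>o)"
  define wt where "wt = t powr (-(\<gamma>+1)) * Wt / K"
  define w1 where "w1 = Wo / K"
  have id: "(Qt - Qo)/a - h = Dtv - D1v - wt + w1 + \<Phi> * (\<Psi>t - \<Psi>o)"
    unfolding Dtv_def D1v_def wt_def w1_def by (simp add: diff_divide_distrib algebra_simps)
  have "\<bar>T * (s * ((Qt - Qo)/a - h))\<bar> = s * (T * \<bar>Dtv - D1v - wt + w1 + \<Phi> * (\<Psi>t - \<Psi>o)\<bar>)"
    unfolding id using T s by (simp add: abs_mult)
  also have "\<dots> \<le> s * (T*\<bar>Dtv\<bar> + T*\<bar>D1v\<bar> + T*\<bar>wt\<bar> + T*\<bar>w1\<bar> + \<bar>\<Phi>\<bar> * (T*\<bar>\<Psi>t\<bar>) + \<bar>\<Phi>\<bar> * (T*\<bar>\<Psi>o\<bar>))"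
  proof -
    have "\<bar>Dtv - D1v - wt + w1 + \<Phi> * (\<Psi>t - \<Psi>o)\<bar> \<le> \<bar>Dtv\<bar> + \<bar>D1v\<bar> + \<bar>wt\<bar> + \<bar>w1\<bar> + \<bar>\<Phi>\<bar> * \<bar>\<Psi>t\<bar> + \<bar>\<Phi>\<bar> * \<bar>\<Psi>o\<bar>"
    proof -
      have "\<bar>\<Phi> * (\<Psi>t - \<Psi>o)\<bar> \<le> \<bar>\<Phi>\<bar> * \<bar>\<Psi>t\<bar> + \<bar>\<Phi>\<bar> * \<bar>\<Psi>o\<bar>"
        by (simp add: abs_mult right_diff_distrib[symmetric] distrib_left[symmetric] mult_left_mono abs_triangle_ineq4)
      thus ?thesis by linarith
    qed
    then have "T * \<bar>Dtv - D1v - wt + w1 + \<Phi> * (\<Psi>t - \<Psi>o)\<bar> \<le> T * (\<bar>Dtv\<bar> + \<bar>D1v\<bar> + \<bar>wt\<bar> + \<bar>w1\<bar> + \<bar>\<Phi>\<bar> * \<bar>\<Psi>t\<bar> + \<bar>\<Phi>\<bar> * \<bar>\<Psi>o\<bar>)"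
      using T by (intro mult_left_mono) auto
    thus ?thesis using s by (intro mult_left_mono) (auto simp: algebra_simps)
  qed
  also have "\<dots> = s*(T*\<bar>Dtv\<bar>) + s*(T*\<bar>D1v\<bar>) + s*(T*\<bar>wt\<bar>) + s*(T*\<bar>w1\<bar>) + (s*\<bar>\<Phi>\<bar>) * (T*\<bar>\<Psi>t\<bar>) + (s*\<bar>\<Phi>\<bar>) * (T*\<bar>\<Psi>o\<bar>)"
    by (simp add: algebra_simps)
  also have "\<dots> \<le> (1 + B\<Phi>) + (1 + B\<Phi>) + CW + CW + B\<Phi> * B\<Psi> + B\<Phi> * \<bar>\<Psi>o\<bar>"
  proof -
    have sr: "s * r \<le> 1 + B\<Phi>" unfolding r using s BP by (simp add: s_def distrib_left)
    have a1: "s*(T*\<bar>Dtv\<bar>) \<le> 1 + B\<Phi>"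
    proof -
      have "T*\<bar>Dtv\<bar> \<le> r" using Dt T unfolding T_def Dtv_def by (simp add: abs_mult)
      thus ?thesis using sr s by (meson mult_left_mono less_imp_le order_trans)
    qed
    have a2: "s*(T*\<bar>D1v\<bar>) \<le> 1 + B\<Phi>"
    proof -
      have "T*\<bar>D1v\<bar> \<le> r" using D1 T unfolding D1v_def by (meson abs_ge_zero mult_left_le_one_le order_trans)
      thus ?thesis using sr s by (meson mult_left_mono less_imp_le order_trans)
    qed
    have a3: "s*(T*\<bar>wt\<bar>) \<le> CW"
    proof -
      have "T*\<bar>wt\<bar> \<le> CW / s" unfolding T_def wt_def s_def c(1)
        by (rule W_term[OF t K e Wt])
      thus ?thesis using s by (simp add: field_simps)
    qed
    have CW: "CW \<ge> 0"
    proof (rule ccontr)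
      assume "\<not> CW \<ge> 0" then have "CW * sqrt K < 0" using K by (simp add: mult_neg_pos)
      thus False using Wo by linarith
    qed
    have a4: "s*(T*\<bar>w1\<bar>) \<le> CW"
    proof -
      have "T*\<bar>w1\<bar> \<le> \<bar>w1\<bar>" using T by (simp add: mult_left_le_one_le)
      also have "\<bar>w1\<bar> \<le> CW * s / K" unfolding w1_def s_def using Wo K by (simp add: abs_divide divide_right_mono)
      finally have "s*(T*\<bar>w1\<bar>) \<le> s * (CW * s / K)" using s by (intro mult_left_mono) auto
      also have "s * (CW * s / K) = CW"
      proof -
        have "s * s = K" unfolding s_def using K by simp
        thus ?thesis using K by (simp add: field_simps)
      qed
      finally show ?thesis .
    qed
    have BPn: "B\<Phi> \<ge> 0" using BP s by (metis abs_ge_zero order_trans s_def zero_le_mult_iff less_imp_le)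
    have a5: "(s*\<bar>\<Phi>\<bar>) * (T*\<bar>\<Psi>t\<bar>) \<le> B\<Phi> * B\<Psi>"
      using BP Ps s T BPn unfolding s_def T_def by (intro mult_mono) auto
    have a6: "(s*\<bar>\<Phi>\<bar>) * (T*\<bar>\<Psi>o\<bar>) \<le> B\<Phi> * \<bar>\<Psi>o\<bar>"
    proof -
      have "T*\<bar>\<Psi>o\<bar> \<le> \<bar>\<Psi>o\<bar>" using T by (simp add: mult_left_le_one_le)
      thus ?thesis using BP s T BPn unfolding s_def by (intro mult_mono) auto
    qed
    show ?thesis using a1 a2 a3 a4 a5 a6 by linarith
  qed
  also have "\<dots> = 2*(1+B\<Phi>) + 2*CW + B\<Phi>*(B\<Psi> + \<bar>\<Psi>o\<bar>)" by (simp add: algebra_simps)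
  finally show ?thesis unfolding T_def s_def .
qed

lemma notin_bound:
  assumes "{\<omega>\<in>S. \<exists>t\<in>T. f t \<omega> > (g t::real)} \<subseteq> A" "\<omega> \<in> S" "\<omega> \<notin> A" "t \<in> T"
  shows "f t \<omega> \<le> g t"
proof (rule ccontr)
  assume "\<not> f t \<omega> \<le> g t"
  then have "\<omega> \<in> {\<omega>\<in>S. \<exists>t\<in>T. f t \<omega> > g t}" using assms(2,4) not_le by blast
  thus False using assms(1,3) by blast
qed

theorem corollary3p1:
  fixes P :: "'b measure" and X :: "nat \<Rightarrow> 'b \<Rightarrow> real" and F :: "real \<Rightarrow> real"
    and k :: "nat \<Rightarrow> nat" and \<gamma>0 :: real
    and a \<Phi> \<Psi> :: "real \<Rightarrow> real"
    and M :: "'a measure" and W :: "real \<Rightarrow> 'a \<Rightarrow> real"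
    and Q :: "nat \<Rightarrow> real \<Rightarrow> 'a \<Rightarrow> real"
    and a_t \<Phi>t :: "real \<Rightarrow> real"
  assumes P: "prob_space P"
    and X_meas: "\<And>i. X i \<in> borel_measurable P"
    and X_indep: "prob_space.indep_vars P (\<lambda>_. borel) X {1..}"
    and X_F: "\<And>i x. i \<ge> 1 \<Longrightarrow> measure P {\<omega>\<in>space P. X i \<omega> \<le> x} = F x"
    and k_top: "filterlim k at_top sequentially"
    and k_o: "(\<lambda>n. real (k n) / real n) \<longlonglongrightarrow> 0"
    and \<gamma>0: "\<gamma>0 > - 1/2"
    and a_pos: "\<And>t. t \<in> {0<..<1} \<Longrightarrow> a t > 0"
    and \<Phi>_pos: "\<And>t. t \<in> {0<..<1} \<Longrightarrow> \<Phi> t > 0"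
    and a_meas: "a \<in> borel_measurable (restrict_space borel {0<..<1})"
    and \<Phi>_meas: "\<Phi> \<in> borel_measurable (restrict_space borel {0<..<1})"
    and a_lb: "locally_bounded_on {0<..<1} a"
    and \<Phi>_lb: "locally_bounded_on {0<..<1} \<Phi>"
    and second_order: "\<And>x. x > 0 \<Longrightarrow>
       ((\<lambda>t. ((gen_inv F (1 - t * x) - gen_inv F (1 - t)) / a t - hfun \<gamma>0 x) / \<Phi> t)
          \<longlongrightarrow> \<Psi> x) (at_right 0)"
    and \<Psi>_nonconst: "\<not> (\<exists>c. \<forall>x>0. x \<noteq> 1 \<longrightarrow> \<Psi> x / hfun \<gamma>0 x = c)"
    and \<Phi>_sign: "(\<forall>\<^sub>F t in at_right 0. \<Phi> t \<ge> 0) \<or> (\<forall>\<^sub>F t in at_right 0. \<Phi> t \<le> 0)"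
    and \<Phi>_zero: "(\<Phi> \<longlongrightarrow> 0) (at_right 0)"
    and M: "prob_space M"
    and W: "std_brownian_motion M W"
    and Q_meas: "\<And>n t. Q n t \<in> borel_measurable M"
    and Q_distr: "\<And>n J. finite J \<Longrightarrow> J \<subseteq> {0..1} \<Longrightarrow>
       distr M (PiM J (\<lambda>_. borel)) (\<lambda>\<omega>. \<lambda>t\<in>J. Q n t \<omega>) =
       distr P (PiM J (\<lambda>_. borel))
         (\<lambda>\<omega>. \<lambda>t\<in>J. order_stat X n (n - nat \<lfloor>real (k n) * t\<rfloor>) \<omega>)"
    and a_t_approx: "(\<lambda>n. a_t (real (k n) / real n) / a (real (k n) / real n) - 1)
                     \<in> o(\<lambda>n. \<Phi> (real (k n) / real n))"
    and \<Phi>t_equiv: "(\<lambda>n. \<Phi>t (real (k n) / real n)) \<sim>[sequentially] (\<lambda>n. \<Phi> (real (k n) / real n))"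
    and approx: "\<And>\<epsilon>. \<epsilon> > 0 \<Longrightarrow> sup_op M
       (\<lambda>n t \<omega>. t powr (\<gamma>0 + 1/2 + \<epsilon>) *
          ((Q n t \<omega> - gen_inv F (1 - real (k n) / real n)) / a_t (real (k n) / real n)
           - (hfun \<gamma>0 t - t powr (- (\<gamma>0 + 1)) * W (real (k n) * t) \<omega> / real (k n)
              + \<Phi>t (real (k n) / real n) * \<Psi> t)))
       (\<lambda>n. 1 / sqrt (real (k n)) + \<bar>\<Phi>t (real (k n) / real n)\<bar>)"
    and \<Phi>_rate: "(\<lambda>n. \<Phi> (real (k n) / real n)) \<in> O(\<lambda>n. 1 / sqrt (real (k n)))"
  shows "\<forall>\<epsilon>>0. sup_Op1 M
     (\<lambda>n t \<omega>. t powr (\<gamma>0 + 1/2 + \<epsilon>) *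
        (sqrt (real (k n)) * ((Q n t \<omega> - Q n 1 \<omega>) / a_t (real (k n) / real n) - hfun \<gamma>0 t)))"
  proof (intro allI impI)
  fix \<epsilon> :: real assume \<epsilon>: "\<epsilon> > 0"
  interpret Mp: prob_space M by (rule M)
  define c where "c = \<gamma>0 + 1/2 + \<epsilon>"
  have c: "c > 0" "c > \<gamma>0" using \<epsilon> \<gamma>0 unfolding c_def by auto
  define e where "e = min \<epsilon> (1/4)"
  have e: "0 < e" "e \<le> 1/4" "e \<le> \<epsilon>" using \<epsilon> unfolding e_def by auto
  define an where "an = (\<lambda>n. a_t (real (k n) / real n))"
  define \<Phi>n where "\<Phi>n = (\<lambda>n. \<Phi>t (real (k n) / real n))"
  define bn where "bn = (\<lambda>n. gen_inv F (1 - real (k n) / real n))"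
  define rn where "rn = (\<lambda>n. 1 / sqrt (real (k n)) + \<bar>\<Phi>t (real (k n) / real n)\<bar>)"
  define D where "D = (\<lambda>n t \<omega>. (Q n t \<omega> - bn n) / an n
       - (hfun \<gamma>0 t - t powr (- (\<gamma>0 + 1)) * W (real (k n) * t) \<omega> / real (k n) + \<Phi>n n * \<Psi> t))"
  have appr: "sup_op M (\<lambda>n t \<omega>. t powr c * D n t \<omega>) rn"
    using approx[OF \<epsilon>] unfolding c_def D_def rn_def bn_def an_def \<Phi>n_def .
  have appr': "\<forall>\<^sub>F n in sequentially. \<exists>A\<in>sets M.
     {\<omega>\<in>space M. \<exists>t\<in>{0<..1}. \<bar>t powr c * D n t \<omega>\<bar> > rn n} \<subseteq> A \<and> measure M A < \<delta>" if "\<delta> > 0" for \<delta>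
  proof -
    have "\<forall>\<delta>>0. \<forall>\<^sub>F n in sequentially. \<exists>A\<in>sets M.
     {\<omega>\<in>space M. \<exists>t\<in>{0<..1}. \<bar>t powr c * D n t \<omega>\<bar> > 1 * rn n} \<subseteq> A \<and> measure M A < \<delta>"
      using appr zero_less_one unfolding sup_op_def by blast
    thus ?thesis using that by simp
  qed
  have ev_k: "\<forall>\<^sub>F n in sequentially. k n \<ge> 1"
    using k_top by (simp add: filterlim_at_top)
  have ev_n: "\<forall>\<^sub>F n in sequentially. n \<ge> 1"
    by (simp add: eventually_ge_at_top)
  have ev_r: "\<forall>\<^sub>F n in sequentially. real (k n) / real n < 1"
    using order_tendstoD(2)[OF k_o, of 1] by simp
  have ev_Phi: "\<forall>\<^sub>F n in sequentially. \<Phi> (real (k n) / real n) > 0"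
    using ev_k ev_n ev_r
  proof eventually_elim
    case (elim n)
    then have "real (k n) / real n \<in> {0<..<1}" by auto
    thus ?case by (rule \<Phi>_pos)
  qed
  have ev_Phin: "\<forall>\<^sub>F n in sequentially. \<Phi>n n \<noteq> 0"
    using asymp_equiv_eventually_zeros[OF \<Phi>t_equiv] ev_Phi unfolding \<Phi>n_def
    by eventually_elim auto
  obtain B\<Phi> where BPhi: "\<forall>\<^sub>F n in sequentially. sqrt (real (k n)) * \<bar>\<Phi>n n\<bar> \<le> B\<Phi>"
  proof -
    have "(\<lambda>n. \<Phi>t (real (k n) / real n)) \<in> O(\<lambda>n. \<Phi> (real (k n) / real n))"
      by (rule asymp_equiv_imp_bigo[OF \<Phi>t_equiv])
    also note \<Phi>_rate
    finally obtain cc where cc: "cc > 0"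
      "\<forall>\<^sub>F n in sequentially. norm (\<Phi>t (real (k n) / real n)) \<le> cc * norm (1 / sqrt (real (k n)))"
      by (elim landau_o.bigE)
    have "\<forall>\<^sub>F n in sequentially. sqrt (real (k n)) * \<bar>\<Phi>n n\<bar> \<le> cc"
      using cc(2) ev_k
    proof eventually_elim
      case (elim n)
      then have pos: "sqrt (real (k n)) > 0" by simp
      have "sqrt (real (k n)) * \<bar>\<Phi>n n\<bar> \<le> sqrt (real (k n)) * (cc * (1 / sqrt (real (k n))))"
        using elim pos unfolding \<Phi>n_def by (intro mult_left_mono) auto
      also have "\<dots> = cc" using pos by simp
      finally show ?case .
    qed
    thus ?thesis by (rule that)
  qed
  obtain H where H: "\<forall>t\<in>{0<..1}. t powr c * \<bar>hfun \<gamma>0 t\<bar> \<le> H" using h_bound[OF c] by blast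
  have hfun1: "hfun \<gamma>0 1 = 0" by (simp add: hfun_def)
  have Dform: "D n t \<omega> = (Q n t \<omega> - bn n) / an n
       - (hfun \<gamma>0 t - t powr (- (\<gamma>0 + 1)) * W (real (k n) * t) \<omega> / real (k n) + \<Phi>n n * \<Psi> t)" for n t \<omega>
    unfolding D_def ..
  have PsiB: "\<exists>B\<Psi>. \<forall>t\<in>{0<..1}. t powr c * \<bar>\<Psi> t\<bar> \<le> B\<Psi>"
  proof (rule ccontr)
    assume nB: "\<not> ?thesis"
    obtain CW where CW: "CW > 0" and CWp: "\<And>K. K > 0 \<Longrightarrow> \<exists>A\<in>sets M. {\<omega>\<in>space M. \<exists>t\<in>{0<..1}.
        \<bar>W (K*t) \<omega>\<bar> > CW * sqrt K * t powr (1/2 - e)} \<subseteq> A \<and> measure M A < 1/4"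
      using bm_sup[OF M W e(1) e(2), of "1/4"] by auto
    have "\<forall>\<^sub>F n in sequentially. (\<exists>A\<in>sets M.
     {\<omega>\<in>space M. \<exists>t\<in>{0<..1}. \<bar>t powr c * D n t \<omega>\<bar> > rn n} \<subseteq> A \<and> measure M A < 1/4)
       \<and> k n \<ge> 1 \<and> n \<ge> 1 \<and> \<Phi>n n \<noteq> 0"
      using appr'[of "1/4"] ev_k ev_n ev_Phin by (auto simp: eventually_conj_iff)
    note evn = this
    obtain n where n: "\<exists>A\<in>sets M.
     {\<omega>\<in>space M. \<exists>t\<in>{0<..1}. \<bar>t powr c * D n t \<omega>\<bar> > rn n} \<subseteq> A \<and> measure M A < 1/4"
       "k n \<ge> 1" "n \<ge> 1" "\<Phi>n n \<noteq> 0"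
      using eventually_happens'[OF sequentially_bot evn] by blast
    obtain A1 where A1: "A1 \<in> sets M" "{\<omega>\<in>space M. \<exists>t\<in>{0<..1}. \<bar>t powr c * D n t \<omega>\<bar> > rn n} \<subseteq> A1"
      "measure M A1 < 1/4" using n(1) by blast
    define K where "K = real (k n)"
    have K: "K > 0" using n(2) unfolding K_def by simp
    obtain A2 where A2: "A2 \<in> sets M" "{\<omega>\<in>space M. \<exists>t\<in>{0<..1}.
        \<bar>W (K*t) \<omega>\<bar> > CW * sqrt K * t powr (1/2 - e)} \<subseteq> A2" "measure M A2 < 1/4"
      using CWp[OF K] by blast
    have m0: "(\<lambda>\<omega>. Q n 0 \<omega> - bn n) \<in> borel_measurable M" using Q_meas by simp
    have m1: "(\<lambda>\<omega>. Q n 1 \<omega> - bn n) \<in> borel_measurable M" using Q_meas by simp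
    obtain z0 where z0: "measure M {\<omega>\<in>space M. \<bar>Q n 0 \<omega> - bn n\<bar> > z0} < 1/8"
      using tight[OF M m0, of "1/8"] by auto
    obtain z1 where z1: "measure M {\<omega>\<in>space M. \<bar>Q n 1 \<omega> - bn n\<bar> > z1} < 1/8"
      using tight[OF M m1, of "1/8"] by auto
    define z where "z = max z0 z1"
    define R0 where "R0 = rn n + z / \<bar>an n\<bar> + H + CW / sqrt K"
    obtain t where t: "t \<in> {0<..1}" and tbig: "t powr c * \<bar>\<Psi> t\<bar> > R0 / \<bar>\<Phi>n n\<bar>"
    proof -
      from nB have "\<exists>t\<in>{0<..1}. \<not> (t powr c * \<bar>\<Psi> t\<bar> \<le> R0 / \<bar>\<Phi>n n\<bar>)" by blast
      thus ?thesis using that by (auto simp: not_le)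
    qed
    define Y where "Y = (\<lambda>t \<omega>. order_stat X n (n - nat \<lfloor>real (k n) * t\<rfloor>) \<omega>)"
    have o1: "AE \<omega> in M. Q n t \<omega> \<le> Q n 0 \<omega>"
    proof (rule Q_order[OF M Q_meas, where P=P and Y=Y])
      show "distr M (PiM {0,t} (\<lambda>_. borel)) (\<lambda>\<omega>. \<lambda>t\<in>{0,t}. Q n t \<omega>) =
            distr P (PiM {0,t} (\<lambda>_. borel)) (\<lambda>\<omega>. \<lambda>t\<in>{0,t}. Y t \<omega>)"
        unfolding Y_def by (rule Q_distr) (use t in auto)
      show "Y t \<omega> \<le> Y 0 \<omega>" for \<omega>
        unfolding Y_def by (rule order_stat_mono) (use n in auto)
    qed
    have o2: "AE \<omega> in M. Q n 1 \<omega> \<le> Q n t \<omega>"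
    proof (rule Q_order[OF M Q_meas, where P=P and Y=Y])
      show "distr M (PiM {t,1} (\<lambda>_. borel)) (\<lambda>\<omega>. \<lambda>t\<in>{t,1}. Q n t \<omega>) =
            distr P (PiM {t,1} (\<lambda>_. borel)) (\<lambda>\<omega>. \<lambda>t\<in>{t,1}. Y t \<omega>)"
        unfolding Y_def by (rule Q_distr) (use t in auto)
      show "Y 1 \<omega> \<le> Y t \<omega>" for \<omega>
      proof -
        have "\<lfloor>real (k n) * t\<rfloor> \<le> \<lfloor>real (k n)\<rfloor>"
          using t by (intro floor_mono) (simp add: mult_left_le)
        then have "nat \<lfloor>real (k n) * t\<rfloor> \<le> k n" by simp
        then have "n - k n \<le> n - nat \<lfloor>real (k n) * t\<rfloor>" by simp
        thus ?thesis unfolding Y_def by (intro order_stat_mono) (use n in auto)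
      qed
    qed
    have "AE \<omega> in M. Q n 1 \<omega> \<le> Q n t \<omega> \<and> Q n t \<omega> \<le> Q n 0 \<omega>" using o1 o2 by auto
    then obtain NQ where NQ: "{\<omega>\<in>space M. \<not> (Q n 1 \<omega> \<le> Q n t \<omega> \<and> Q n t \<omega> \<le> Q n 0 \<omega>)} \<subseteq> NQ"
      "emeasure M NQ = 0" "NQ \<in> sets M" by (rule AE_E)
    define Z0 where "Z0 = {\<omega>\<in>space M. \<bar>Q n 0 \<omega> - bn n\<bar> > z0}"
    define Z1 where "Z1 = {\<omega>\<in>space M. \<bar>Q n 1 \<omega> - bn n\<bar> > z1}"
    have Z0s: "Z0 \<in> sets M" unfolding Z0_def using m0 by measurable
    have Z1s: "Z1 \<in> sets M" unfolding Z1_def using m1 by measurable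
    have cover: "space M \<subseteq> A1 \<union> A2 \<union> NQ \<union> Z0 \<union> Z1"
    proof
      fix \<omega> assume \<omega>: "\<omega> \<in> space M"
      show "\<omega> \<in> A1 \<union> A2 \<union> NQ \<union> Z0 \<union> Z1"
      proof (rule ccontr)
        assume nin: "\<omega> \<notin> A1 \<union> A2 \<union> NQ \<union> Z0 \<union> Z1"
        have bD: "\<bar>t powr c * D n t \<omega>\<bar> \<le> rn n" by (rule notin_bound[OF A1(2) \<omega> _ t]) (use nin in auto)
        have bW: "\<bar>W (K*t) \<omega>\<bar> \<le> CW * sqrt K * t powr (1/2 - e)" by (rule notin_bound[OF A2(2) \<omega> _ t]) (use nin in auto)
        have bQ: "Q n 1 \<omega> \<le> Q n t \<omega>" "Q n t \<omega> \<le> Q n 0 \<omega>" using nin NQ(1) \<omega> by auto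
        have bz: "\<bar>Q n 0 \<omega> - bn n\<bar> \<le> z" "\<bar>Q n 1 \<omega> - bn n\<bar> \<le> z"
          using nin \<omega> unfolding Z0_def Z1_def z_def by auto
        have bQt: "\<bar>Q n t \<omega> - bn n\<bar> \<le> z" using bQ bz by linarith
        have tc: "0 \<le> t powr c" "t powr c \<le> 1" using t c by (auto intro: powr_le1)
        have q1: "t powr c * \<bar>(Q n t \<omega> - bn n) / an n\<bar> \<le> z / \<bar>an n\<bar>"
        proof -
          have "t powr c * \<bar>(Q n t \<omega> - bn n) / an n\<bar> \<le> \<bar>(Q n t \<omega> - bn n) / an n\<bar>"
            by (rule mult_left_le_one_le) (use tc in auto)
          also have "\<dots> \<le> z / \<bar>an n\<bar>" using bQt by (simp add: abs_divide divide_right_mono)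
          finally show ?thesis .
        qed
        have q2: "t powr c * \<bar>hfun \<gamma>0 t\<bar> \<le> H" using H t by blast
        have q3: "t powr c * \<bar>t powr (- (\<gamma>0 + 1)) * W (K * t) \<omega> / K\<bar> \<le> CW / sqrt K"
          unfolding c_def using t K e(1,3) bW by (intro W_term) auto
        have ident: "\<Phi>n n * \<Psi> t = (Q n t \<omega> - bn n) / an n - hfun \<gamma>0 t
            + t powr (- (\<gamma>0 + 1)) * W (K * t) \<omega> / K - D n t \<omega>"
          unfolding Dform K_def by simp
        have "t powr c * (\<bar>\<Phi>n n\<bar> * \<bar>\<Psi> t\<bar>) = \<bar>t powr c * (\<Phi>n n * \<Psi> t)\<bar>"
          using tc by (simp add: abs_mult)
        also have "\<dots> \<le> t powr c * \<bar>(Q n t \<omega> - bn n) / an n\<bar> + t powr c * \<bar>hfun \<gamma>0 t\<bar>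
            + t powr c * \<bar>t powr (- (\<gamma>0 + 1)) * W (K * t) \<omega> / K\<bar> + \<bar>t powr c * D n t \<omega>\<bar>"
        proof -
          have "\<bar>t powr c * (\<Phi>n n * \<Psi> t)\<bar> = \<bar>t powr c * ((Q n t \<omega> - bn n) / an n) - t powr c * hfun \<gamma>0 t
            + t powr c * (t powr (- (\<gamma>0 + 1)) * W (K * t) \<omega> / K) - t powr c * D n t \<omega>\<bar>"
            unfolding ident by (simp add: algebra_simps)
          also have "\<dots> \<le> \<bar>t powr c * ((Q n t \<omega> - bn n) / an n)\<bar> + \<bar>t powr c * hfun \<gamma>0 t\<bar>
            + \<bar>t powr c * (t powr (- (\<gamma>0 + 1)) * W (K * t) \<omega> / K)\<bar> + \<bar>t powr c * D n t \<omega>\<bar>"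
            by linarith
          finally show ?thesis using tc by (simp add: abs_mult)
        qed
        also have "\<dots> \<le> R0" unfolding R0_def using q1 q2 q3 bD by linarith
        finally have "t powr c * \<bar>\<Psi> t\<bar> * \<bar>\<Phi>n n\<bar> \<le> R0" by (simp add: algebra_simps)
        then have "t powr c * \<bar>\<Psi> t\<bar> \<le> R0 / \<bar>\<Phi>n n\<bar>" using n(4) by (simp add: pos_le_divide_eq)
        thus False using tbig by linarith
      qed
    qed
    have "1 = measure M (space M)" using Mp.prob_space by simp
    also have "\<dots> \<le> measure M (A1 \<union> A2 \<union> NQ \<union> Z0 \<union> Z1)"
      by (rule Mp.finite_measure_mono[OF cover]) (use A1 A2 NQ Z0s Z1s in auto)
    also have "\<dots> \<le> measure M A1 + measure M A2 + measure M NQ + measure M Z0 + measure M Z1"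
    proof -
      have s1: "A1 \<union> A2 \<in> sets M" "A1 \<union> A2 \<union> NQ \<in> sets M" "A1 \<union> A2 \<union> NQ \<union> Z0 \<in> sets M"
        using A1 A2 NQ Z0s by auto
      have "measure M (A1 \<union> A2 \<union> NQ \<union> Z0 \<union> Z1) \<le> measure M (A1 \<union> A2 \<union> NQ \<union> Z0) + measure M Z1"
        by (rule measure_Un_le[OF s1(3) Z1s])
      moreover have "measure M (A1 \<union> A2 \<union> NQ \<union> Z0) \<le> measure M (A1 \<union> A2 \<union> NQ) + measure M Z0"
        by (rule measure_Un_le[OF s1(2) Z0s])
      moreover have "measure M (A1 \<union> A2 \<union> NQ) \<le> measure M (A1 \<union> A2) + measure M NQ"
        by (rule measure_Un_le[OF s1(1) NQ(3)])
      moreover have "measure M (A1 \<union> A2) \<le> measure M A1 + measure M A2"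
        by (rule measure_Un_le[OF A1(1) A2(1)])
      ultimately show ?thesis by linarith
    qed
    also have "measure M NQ = 0" using NQ by (simp add: measure_def)
    finally show False using A1(3) A2(3) z0 z1 unfolding Z0_def Z1_def by linarith
  qed
  then obtain B\<Psi> where BPsi: "\<forall>t\<in>{0<..1}. t powr c * \<bar>\<Psi> t\<bar> \<le> B\<Psi>" by blast
  show "sup_Op1 M (\<lambda>n t \<omega>. t powr (\<gamma>0 + 1/2 + \<epsilon>) *
        (sqrt (real (k n)) * ((Q n t \<omega> - Q n 1 \<omega>) / a_t (real (k n) / real n) - hfun \<gamma>0 t)))"
    unfolding sup_Op1_def
  proof (intro allI impI)
    fix \<delta> :: real assume \<delta>: "\<delta> > 0"
    obtain CW where CW: "CW > 0" and CWp: "\<And>K. K > 0 \<Longrightarrow> \<exists>A\<in>sets M. {\<omega>\<in>space M. \<exists>t\<in>{0<..1}.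
        \<bar>W (K*t) \<omega>\<bar> > CW * sqrt K * t powr (1/2 - e)} \<subseteq> A \<and> measure M A < \<delta>/2"
      using bm_sup[OF M W e(1) e(2), of "\<delta>/2"] \<delta> by auto
    define C where "C = 2*(1+B\<Phi>) + 2*CW + B\<Phi>*(B\<Psi> + \<bar>\<Psi> 1\<bar>)"
    show "\<exists>C. \<forall>\<^sub>F n in sequentially. \<exists>A\<in>sets M.
       {\<omega> \<in> space M. \<exists>t\<in>{0<..1}. C < \<bar>t powr (\<gamma>0 + 1/2 + \<epsilon>) *
        (sqrt (real (k n)) * ((Q n t \<omega> - Q n 1 \<omega>) / a_t (real (k n) / real n) - hfun \<gamma>0 t))\<bar>}
       \<subseteq> A \<and> measure M A < \<delta>"
    proof (intro exI[of _ C])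
      have "\<forall>\<^sub>F n in sequentially. (\<exists>A\<in>sets M.
        {\<omega>\<in>space M. \<exists>t\<in>{0<..1}. \<bar>t powr c * D n t \<omega>\<bar> > rn n} \<subseteq> A \<and> measure M A < \<delta>/2)
         \<and> k n \<ge> 1 \<and> sqrt (real (k n)) * \<bar>\<Phi>n n\<bar> \<le> B\<Phi>"
        using appr'[of "\<delta>/2"] \<delta> ev_k BPhi by (auto simp: eventually_conj_iff)
      then show "\<forall>\<^sub>F n in sequentially. \<exists>A\<in>sets M.
       {\<omega> \<in> space M. \<exists>t\<in>{0<..1}. C < \<bar>t powr (\<gamma>0 + 1/2 + \<epsilon>) *
        (sqrt (real (k n)) * ((Q n t \<omega> - Q n 1 \<omega>) / a_t (real (k n) / real n) - hfun \<gamma>0 t))\<bar>}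
       \<subseteq> A \<and> measure M A < \<delta>"
      proof eventually_elim
        case (elim n)
        obtain A1 where A1: "A1 \<in> sets M" "{\<omega>\<in>space M. \<exists>t\<in>{0<..1}. \<bar>t powr c * D n t \<omega>\<bar> > rn n} \<subseteq> A1"
          "measure M A1 < \<delta>/2" using elim by blast
        define K where "K = real (k n)"
        have K: "K > 0" using elim unfolding K_def by simp
        obtain A2 where A2: "A2 \<in> sets M" "{\<omega>\<in>space M. \<exists>t\<in>{0<..1}.
          \<bar>W (K*t) \<omega>\<bar> > CW * sqrt K * t powr (1/2 - e)} \<subseteq> A2" "measure M A2 < \<delta>/2"
          using CWp[OF K] by blast
        show ?case
        proof (intro bexI[of _ "A1 \<union> A2"] conjI subsetI)
          show "A1 \<union> A2 \<in> sets M" using A1 A2 by auto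
          have "measure M (A1 \<union> A2) \<le> measure M A1 + measure M A2"
            by (rule measure_Un_le) (use A1 A2 in auto)
          thus "measure M (A1 \<union> A2) < \<delta>" using A1(3) A2(3) by linarith
          fix \<omega> assume "\<omega> \<in> {\<omega> \<in> space M. \<exists>t\<in>{0<..1}. C < \<bar>t powr (\<gamma>0 + 1/2 + \<epsilon>) *
            (sqrt (real (k n)) * ((Q n t \<omega> - Q n 1 \<omega>) / a_t (real (k n) / real n) - hfun \<gamma>0 t))\<bar>}"
          then obtain t where \<omega>: "\<omega> \<in> space M" and t: "t \<in> {0<..1}" and big: "C < \<bar>t powr c *
            (sqrt K * ((Q n t \<omega> - Q n 1 \<omega>) / an n - hfun \<gamma>0 t))\<bar>"
            unfolding c_def K_def an_def by auto
          show "\<omega> \<in> A1 \<union> A2"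
          proof (rule ccontr)
            assume nin: "\<omega> \<notin> A1 \<union> A2"
            have one: "(1::real) \<in> {0<..1}" by simp
            have bDt: "\<bar>t powr c * D n t \<omega>\<bar> \<le> rn n" by (rule notin_bound[OF A1(2) \<omega> _ t]) (use nin in auto)
            have bD1: "\<bar>1 powr c * D n 1 \<omega>\<bar> \<le> rn n" by (rule notin_bound[OF A1(2) \<omega> _ one]) (use nin in auto)
            have bWt: "\<bar>W (K*t) \<omega>\<bar> \<le> CW * sqrt K * t powr (1/2 - e)" by (rule notin_bound[OF A2(2) \<omega> _ t]) (use nin in auto)
            have bW1: "\<bar>W (K*1) \<omega>\<bar> \<le> CW * sqrt K * 1 powr (1/2 - e)" by (rule notin_bound[OF A2(2) \<omega> _ one]) (use nin in auto)
            have "\<bar>t powr c * (sqrt K * ((Q n t \<omega> - Q n 1 \<omega>) / an n - hfun \<gamma>0 t))\<bar> \<le> C"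
              unfolding C_def
            proof (rule final_bound[where \<gamma>=\<gamma>0 and \<epsilon>=\<epsilon> and e=e and b="bn n" and Wt="W (K*t) \<omega>"
                  and Wo="W K \<omega>" and \<Phi>="\<Phi>n n" and \<Psi>t="\<Psi> t" and \<Psi>o="\<Psi> 1" and r="rn n"])
              show "0 < t" "t \<le> 1" using t by auto
              show "c = \<gamma>0 + 1/2 + \<epsilon>" "c > 0" using c c_def by auto
              show "K > 0" "0 < e" "e \<le> \<epsilon>" using K e by auto
              show "\<bar>t powr c * ((Q n t \<omega> - bn n) / an n - (hfun \<gamma>0 t - t powr (- (\<gamma>0 + 1)) * W (K * t) \<omega> / K + \<Phi>n n * \<Psi> t))\<bar> \<le> rn n"
                using bDt unfolding Dform K_def .
              show "\<bar>(Q n 1 \<omega> - bn n) / an n - (0 - W K \<omega> / K + \<Phi>n n * \<Psi> 1)\<bar> \<le> rn n"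
                using bD1 unfolding Dform K_def by (simp add: hfun1)
              show "rn n = 1 / sqrt K + \<bar>\<Phi>n n\<bar>" unfolding rn_def K_def \<Phi>n_def ..
              show "sqrt K * \<bar>\<Phi>n n\<bar> \<le> B\<Phi>" using elim unfolding K_def by simp
              show "\<bar>W (K * t) \<omega>\<bar> \<le> CW * sqrt K * t powr (1 / 2 - e)" by (rule bWt)
              show "\<bar>W K \<omega>\<bar> \<le> CW * sqrt K" using bW1 by simp
              show "t powr c * \<bar>\<Psi> t\<bar> \<le> B\<Psi>" using BPsi t by blast
            qed
            thus False using big by linarith
          qed
        qed
      qed
    qed
  qed
qed

end
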